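(* Let $G$ be a connected bipartite graph with at least two vertices. A vertex $v\in V(G)$ is an $\mathcal{L}$-branch leaf of some BFS ordering of $G$ if and only if there is a vertex $r\in V(G)\setminus\{v\}$ such that $\mathrm{dist}_G(r,w)=\mathrm{dist}_{G-v}(r,w)$ for all $w\in V(G)\setminus\{v\}$.
   Context: Graphs are finite, simple, undirected; $\mathrm{dist}_H(a,b)$ is the number of edges of a shortest $a$-$b$ path in $H$. A vertex ordering of $G$ is a bijection $\sigma:\{1,\dots,n\}\to V(G)$; $u\prec_\sigma w$ means $u$ comes before $w$. BFS orderings are produced by the label search: initially all labels are $\emptyset$; for $i=1,\dots,n$ choose any unnumbered vertex $x$ such that there is no unnumbered $y$ with $\mathrm{label}(x)\prec\mathrm{label}(y)$, set $\sigma(i)=x$, and add $i$ to the labels of the unnumbered neighbors of $x$, where $A\prec B$ iff ($A=\emptyset$ and $B\neq\emptyset$) or $\min(A)>\min(B)$. The $\mathcal{L}$-tree of $\sigma$ is the spanning tree containing, for each $v\neq\sigma(1)$, the edge from $v$ to its rightmost neighbor $w$ with $w\prec_\sigma v$. A vertex $v\neq\sigma(1)$ that is a leaf of the $\mathcal{L}$-tree is an $\mathcal{L}$-branch leaf of $\sigma$. *)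

theory Defs
  imports Main "HOL-Library.Extended_Nat"
begin

definition graph :: "'a set \<Rightarrow> ('a \<Rightarrow> 'a \<Rightarrow> bool) \<Rightarrow> bool" where
  "graph V E \<longleftrightarrow> finite V \<and> (\<forall>x y. E x y \<longrightarrow> x \<in> V \<and> y \<in> V)
     \<and> (\<forall>x y. E x y \<longrightarrow> E y x) \<and> (\<forall>x. \<not> E x x)"

definition walk :: "'a set \<Rightarrow> ('a \<Rightarrow> 'a \<Rightarrow> bool) \<Rightarrow> 'a list \<Rightarrow> bool" where
  "walk V E p \<longleftrightarrow> p \<noteq> [] \<and> set p \<subseteq> V \<and> (\<forall>i. Suc i < length p \<longrightarrow> E (p ! i) (p ! Suc i))"

definition gdist :: "'a set \<Rightarrow> ('a \<Rightarrow> 'a \<Rightarrow> bool) \<Rightarrow> 'a \<Rightarrow> 'a \<Rightarrow> enat" where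
  "gdist V E a b = (INF p \<in> {p. walk V E p \<and> hd p = a \<and> last p = b}. enat (length p - 1))"

definition connected_graph :: "'a set \<Rightarrow> ('a \<Rightarrow> 'a \<Rightarrow> bool) \<Rightarrow> bool" where
  "connected_graph V E \<longleftrightarrow> (\<forall>u\<in>V. \<forall>w\<in>V. \<exists>p. walk V E p \<and> hd p = u \<and> last p = w)"

definition bipartite :: "'a set \<Rightarrow> ('a \<Rightarrow> 'a \<Rightarrow> bool) \<Rightarrow> bool" where
  "bipartite V E \<longleftrightarrow> (\<exists>A. \<forall>u w. E u w \<longrightarrow> (u \<in> A \<longleftrightarrow> w \<notin> A))"

definition del_vertex :: "'a set \<Rightarrow> ('a \<Rightarrow> 'a \<Rightarrow> bool) \<Rightarrow> 'a \<Rightarrow> 'a set \<times> ('a \<Rightarrow> 'a \<Rightarrow> bool)" where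
  "del_vertex V E v = (V - {v}, \<lambda>x y. E x y \<and> x \<noteq> v \<and> y \<noteq> v)"

definition label_less :: "nat set \<Rightarrow> nat set \<Rightarrow> bool" where
  "label_less A B \<longleftrightarrow> (A = {} \<and> B \<noteq> {}) \<or> (A \<noteq> {} \<and> B \<noteq> {} \<and> Min A > Min B)"

text \<open>Vertex orderings are lists (position i, 0-based, corresponds to sigma(i+1)).
  The label of x just before step i is the set of positions j < i of already
  numbered neighbours of x.\<close>
definition label :: "'a list \<Rightarrow> ('a \<Rightarrow> 'a \<Rightarrow> bool) \<Rightarrow> nat \<Rightarrow> 'a \<Rightarrow> nat set" where
  "label \<sigma> E i x = {j. j < i \<and> E (\<sigma> ! j) x}"

definition bfs_ordering :: "'a set \<Rightarrow> ('a \<Rightarrow> 'a \<Rightarrow> bool) \<Rightarrow> 'a list \<Rightarrow> bool" where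
  "bfs_ordering V E \<sigma> \<longleftrightarrow> distinct \<sigma> \<and> set \<sigma> = V \<and>
     (\<forall>i k. i < k \<and> k < length \<sigma> \<longrightarrow>
        \<not> label_less (label \<sigma> E i (\<sigma> ! i)) (label \<sigma> E i (\<sigma> ! k)))"

definition precedes :: "'a list \<Rightarrow> 'a \<Rightarrow> 'a \<Rightarrow> bool" where
  "precedes \<sigma> u w \<longleftrightarrow> (\<exists>i j. i < j \<and> j < length \<sigma> \<and> \<sigma> ! i = u \<and> \<sigma> ! j = w)"

definition rightmost_left_nb :: "'a list \<Rightarrow> ('a \<Rightarrow> 'a \<Rightarrow> bool) \<Rightarrow> 'a \<Rightarrow> 'a \<Rightarrow> bool" where
  "rightmost_left_nb \<sigma> E v w \<longleftrightarrow> E w v \<and> precedes \<sigma> w v \<and>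
     (\<forall>w'. E w' v \<and> precedes \<sigma> w' v \<longrightarrow> w' = w \<or> precedes \<sigma> w' w)"

definition L_tree_edges :: "'a list \<Rightarrow> ('a \<Rightarrow> 'a \<Rightarrow> bool) \<Rightarrow> 'a set set" where
  "L_tree_edges \<sigma> E = {{w, v} | v w. v \<in> set \<sigma> \<and> v \<noteq> hd \<sigma> \<and> rightmost_left_nb \<sigma> E v w}"

definition L_branch_leaf :: "'a list \<Rightarrow> ('a \<Rightarrow> 'a \<Rightarrow> bool) \<Rightarrow> 'a \<Rightarrow> bool" where
  "L_branch_leaf \<sigma> E v \<longleftrightarrow> v \<in> set \<sigma> \<and> v \<noteq> hd \<sigma> \<and> card {e \<in> L_tree_edges \<sigma> E. v \<in> e} = 1"

end

theory Submission imports Defs begin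

lemma walk_snoc:
  assumes "walk V E p" "E (last p) y" "y \<in> V"
  shows "walk V E (p @ [y])"
  unfolding walk_def
proof (intro conjI allI impI)
  show "p @ [y] \<noteq> []" by simp
  show "set (p @ [y]) \<subseteq> V" using assms unfolding walk_def by auto
  fix i assume i: "Suc i < length (p @ [y])"
  show "E ((p @ [y]) ! i) ((p @ [y]) ! Suc i)"
  proof (cases "Suc i < length p")
    case True thus ?thesis using assms(1) unfolding walk_def by (auto simp: nth_append)
  next
    case False
    hence ii: "i = length p - 1" using i by simp
    have "p \<noteq> []" using assms(1) unfolding walk_def by simp
    thus ?thesis using assms(2) ii by (auto simp: nth_append last_conv_nth)
  qed
qed

lemma walk_butlast:
  assumes "walk V E p" "length p \<ge> 2"
  shows "walk V E (butlast p)" "hd (butlast p) = hd p" "E (last (butlast p)) (last p)"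
proof -
  obtain q y where p: "p = q @ [y]" using assms(1) unfolding walk_def by (metis rev_exhaust)
  have q: "q \<noteq> []" using assms(2) p by auto
  have w: "set p \<subseteq> V" "\<And>i. Suc i < length p \<Longrightarrow> E (p ! i) (p ! Suc i)" using assms(1) unfolding walk_def by auto
  show "walk V E (butlast p)" unfolding walk_def
  proof (intro conjI allI impI)
    show "butlast p \<noteq> []" using p q by simp
    show "set (butlast p) \<subseteq> V" using w(1) p by auto
    fix i assume "Suc i < length (butlast p)"
    thus "E (butlast p ! i) (butlast p ! Suc i)" using w(2)[of i] p by (auto simp: nth_append)
  qed
  show "hd (butlast p) = hd p" using p q by simp
  have "E (p ! (length q - 1)) (p ! Suc (length q - 1))" using w(2)[of "length q - 1"] p q by simp
  thus "E (last (butlast p)) (last p)" using p q by (simp add: nth_append last_conv_nth)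
qed

lemma walk_parity:
  assumes "walk V E p" "\<forall>u w. E u w \<longrightarrow> (u \<in> A \<longleftrightarrow> w \<notin> A)"
  shows "((hd p \<in> A) \<longleftrightarrow> (last p \<in> A)) \<longleftrightarrow> odd (length p)"
  using assms(1)
proof (induction p rule: rev_induct)
  case Nil thus ?case by (simp add: walk_def)
next
  case (snoc x xs)
  show ?case
  proof (cases "xs = []")
    case True thus ?thesis by simp
  next
    case False
    hence "length (xs @ [x]) \<ge> 2" by (cases xs) auto
    from walk_butlast[OF snoc.prems this] False
    have "walk V E xs" "E (last xs) x" by auto
    with snoc.IH have "((hd xs \<in> A) \<longleftrightarrow> (last xs \<in> A)) \<longleftrightarrow> odd (length xs)" by simp
    moreover have "last xs \<in> A \<longleftrightarrow> x \<notin> A" using assms(2) \<open>E (last xs) x\<close> by blast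
    ultimately show ?thesis using False by auto
  qed
qed

lemma list_cross:
  assumes "p \<noteq> []" "hd p \<in> S" "last p \<notin> S"
  shows "\<exists>i. Suc i < length p \<and> p ! i \<in> S \<and> p ! Suc i \<notin> S"
  using assms
proof (induction p)
  case Nil thus ?case by simp
next
  case (Cons a p)
  show ?case
  proof (cases "p = []")
    case True thus ?thesis using Cons by simp
  next
    case False
    show ?thesis
    proof (cases "hd p \<in> S")
      case True
      with Cons.IH False Cons.prems obtain i where "Suc i < length p" "p ! i \<in> S" "p ! Suc i \<notin> S" by auto
      thus ?thesis by (intro exI[of _ "Suc i"]) auto
    next
      case False': False
      thus ?thesis using Cons.prems False by (intro exI[of _ 0]) (auto simp: hd_conv_nth)
    qed
  qed
qed

lemma walk_mono:
  "walk (V - {v}) (\<lambda>x y. E x y \<and> x \<noteq> v \<and> y \<noteq> v) p \<Longrightarrow> walk V E p"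
  by (auto simp: walk_def)

definition dn :: "'a set \<Rightarrow> ('a \<Rightarrow> 'a \<Rightarrow> bool) \<Rightarrow> 'a \<Rightarrow> 'a \<Rightarrow> nat" where
  "dn V E a b = (LEAST n. \<exists>p. walk V E p \<and> hd p = a \<and> last p = b \<and> length p = Suc n)"

lemma dn_walk: assumes "walk V E p" "hd p = a" "last p = b"
  shows "\<exists>q. walk V E q \<and> hd q = a \<and> last q = b \<and> length q = Suc (dn V E a b)"
proof -
  have "length p = Suc (length p - 1)" using assms(1) by (cases p) (auto simp: walk_def)
  hence "\<exists>n. \<exists>p. walk V E p \<and> hd p = a \<and> last p = b \<and> length p = Suc n" using assms by blast
  from LeastI_ex[OF this] show ?thesis unfolding dn_def .
qed

lemma dn_le: assumes "walk V E p" "hd p = a" "last p = b"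
  shows "dn V E a b \<le> length p - 1"
proof -
  have "length p = Suc (length p - 1)" using assms(1) by (cases p) (auto simp: walk_def)
  thus ?thesis unfolding dn_def using assms by (intro Least_le) blast
qed

lemma gdist_le: assumes "walk V E p" "hd p = a" "last p = b"
  shows "gdist V E a b \<le> enat (length p - 1)"
  unfolding gdist_def using assms by (intro INF_lower) auto

lemma gdist_dn: assumes "walk V E p" "hd p = a" "last p = b"
  shows "gdist V E a b = enat (dn V E a b)"
proof (rule antisym)
  obtain q where q: "walk V E q" "hd q = a" "last q = b" "length q = Suc (dn V E a b)"
    using dn_walk[OF assms] by blast
  show "gdist V E a b \<le> enat (dn V E a b)" using gdist_le[OF q(1-3)] q(4) by simp
  show "enat (dn V E a b) \<le> gdist V E a b" unfolding gdist_def
    by (rule INF_greatest) (auto dest: dn_le)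
qed

lemma gdist_inf: assumes "\<not> (\<exists>p. walk V E p \<and> hd p = a \<and> last p = b)"
  shows "gdist V E a b = \<infinity>"
proof -
  have e: "{p. walk V E p \<and> hd p = a \<and> last p = b} = {}" using assms by auto
  show ?thesis unfolding gdist_def e by (simp add: top_enat_def)
qed

definition gkey :: "nat set \<Rightarrow> enat" where
  "gkey A = (if A = {} then \<infinity> else enat (Min A))"

lemma label_less_gkey: "finite A \<Longrightarrow> finite B \<Longrightarrow> label_less A B \<longleftrightarrow> gkey B < gkey A"
  unfolding label_less_def gkey_def by auto


locale bg =
  fixes V :: "'a set" and E :: "'a \<Rightarrow> 'a \<Rightarrow> bool"
  assumes gr: "graph V E" and conn: "connected_graph V E" and bip: "bipartite V E"
begin

lemma finV: "finite V" using gr unfolding graph_def by blast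
lemma symE: "E x y \<Longrightarrow> E y x" using gr unfolding graph_def by blast
lemma inV1: "E x y \<Longrightarrow> x \<in> V" using gr unfolding graph_def by blast
lemma inV2: "E x y \<Longrightarrow> y \<in> V" using gr unfolding graph_def by blast
lemma irr: "\<not> E x x" using gr unfolding graph_def by blast

lemma ex_walk: "a \<in> V \<Longrightarrow> b \<in> V \<Longrightarrow> \<exists>p. walk V E p \<and> hd p = a \<and> last p = b"
  using conn unfolding connected_graph_def by blast

abbreviation d where "d a b \<equiv> dn V E a b"

lemma dwalk: assumes "a \<in> V" "b \<in> V"
  shows "\<exists>p. walk V E p \<and> hd p = a \<and> last p = b \<and> length p = Suc (d a b)"
proof -
  obtain p where "walk V E p" "hd p = a" "last p = b" using ex_walk[OF assms] by blast
  thus ?thesis by (rule dn_walk)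
qed

lemma gdist_d: assumes "a \<in> V" "b \<in> V" shows "gdist V E a b = enat (d a b)"
proof -
  obtain p where "walk V E p" "hd p = a" "last p = b" using ex_walk[OF assms] by blast
  thus ?thesis by (rule gdist_dn)
qed

lemma d_refl: "a \<in> V \<Longrightarrow> d a a = 0"
  using dn_le[of V E "[a]" a a] by (simp add: walk_def)

lemma d_zero: assumes "a \<in> V" "b \<in> V" "d a b = 0" shows "a = b"
proof -
  obtain p where "walk V E p" "hd p = a" "last p = b" "length p = Suc 0" using dwalk[OF assms(1,2)] assms(3) by auto
  thus ?thesis by (cases p) auto
qed

lemma d_edge: assumes "a \<in> V" "E x y" shows "d a y \<le> d a x + 1"
proof -
  obtain p where p: "walk V E p" "hd p = a" "last p = x" "length p = Suc (d a x)"
    using dwalk[OF assms(1) inV1[OF assms(2)]] by auto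
  have w: "walk V E (p @ [y])" using walk_snoc[OF p(1)] p(3) assms(2) inV2 by auto
  have "hd (p @ [y]) = a" using p(1,2) by (auto simp: walk_def)
  from dn_le[OF w this] p(4) show ?thesis by simp
qed

lemma d_pred: assumes "a \<in> V" "x \<in> V" "x \<noteq> a" shows "\<exists>y. E y x \<and> d a y + 1 = d a x"
proof -
  obtain p where p: "walk V E p" "hd p = a" "last p = x" "length p = Suc (d a x)"
    using dwalk[OF assms(1,2)] by auto
  have lp: "length p \<ge> 2"
  proof (rule ccontr)
    assume "\<not> length p \<ge> 2"
    hence "length p = 1" using p(4) by simp
    then obtain z where "p = [z]" by (cases p) auto
    thus False using p assms(3) by simp
  qed
  note b = walk_butlast[OF p(1) this]
  have "d a (last (butlast p)) \<le> length (butlast p) - 1" using dn_le[OF b(1)] b(2) p(2) by simp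
  moreover have "d a x \<le> d a (last (butlast p)) + 1" using d_edge[OF assms(1) b(3)] p(3) by simp
  ultimately have "d a (last (butlast p)) + 1 = d a x" using p(4) lp by simp
  thus ?thesis using b(3) p(3) by blast
qed

lemma d_parity: assumes "a \<in> V" "E x y" shows "d a x \<noteq> d a y"
proof
  assume eq: "d a x = d a y"
  obtain A where A: "\<forall>u w. E u w \<longrightarrow> (u \<in> A \<longleftrightarrow> w \<notin> A)" using bip unfolding bipartite_def by blast
  obtain p where p: "walk V E p" "hd p = a" "last p = x" "length p = Suc (d a x)"
    using dwalk[OF assms(1) inV1[OF assms(2)]] by auto
  obtain q where q: "walk V E q" "hd q = a" "last q = y" "length q = Suc (d a y)"
    using dwalk[OF assms(1) inV2[OF assms(2)]] by auto
  have 1: "((a \<in> A) \<longleftrightarrow> (x \<in> A)) \<longleftrightarrow> odd (Suc (d a x))" using walk_parity[OF p(1) A] p by simp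
  have 2: "((a \<in> A) \<longleftrightarrow> (y \<in> A)) \<longleftrightarrow> odd (Suc (d a x))" using walk_parity[OF q(1) A] q eq by simp
  have 3: "x \<in> A \<longleftrightarrow> y \<notin> A" using A assms(2) by blast
  show False using 1 2 3 by (cases "a \<in> A"; cases "x \<in> A"; cases "y \<in> A") simp_all
qed

end


locale bfs = bg +
  fixes \<sigma> :: "'a list"
  assumes bfs: "bfs_ordering V E \<sigma>" and Vne: "V \<noteq> {}"
begin

lemma dist: "distinct \<sigma>" and setsig: "set \<sigma> = V"
  using bfs unfolding bfs_ordering_def by auto

lemma bfs_cond: "i < k \<Longrightarrow> k < length \<sigma> \<Longrightarrow>
   \<not> label_less (label \<sigma> E i (\<sigma> ! i)) (label \<sigma> E i (\<sigma> ! k))"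
  using bfs unfolding bfs_ordering_def by auto

lemma len_pos: "0 < length \<sigma>" using setsig Vne by (cases \<sigma>) auto

lemma hd_sig: "hd \<sigma> = \<sigma> ! 0" using len_pos by (simp add: hd_conv_nth)

lemma r_in: "\<sigma> ! 0 \<in> V" using len_pos setsig nth_mem by blast

lemma nth_in: "i < length \<sigma> \<Longrightarrow> \<sigma> ! i \<in> V" using setsig nth_mem by blast

lemma ex_idx: "x \<in> V \<Longrightarrow> \<exists>i < length \<sigma>. \<sigma> ! i = x"
  using setsig by (metis in_set_conv_nth)

lemma nth_inj: "i < length \<sigma> \<Longrightarrow> j < length \<sigma> \<Longrightarrow> \<sigma> ! i = \<sigma> ! j \<longleftrightarrow> i = j"
  using dist by (simp add: nth_eq_iff_index_eq)

lemma prec_iff: "a < length \<sigma> \<Longrightarrow> b < length \<sigma> \<Longrightarrow> precedes \<sigma> (\<sigma> ! a) (\<sigma> ! b) \<longleftrightarrow> a < b"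
  unfolding precedes_def using nth_inj by (metis order.strict_trans)

lemma prec_idx: "precedes \<sigma> x y \<Longrightarrow> \<exists>a b. a < b \<and> b < length \<sigma> \<and> \<sigma> ! a = x \<and> \<sigma> ! b = y"
  unfolding precedes_def by blast

lemma prec_asym: "precedes \<sigma> x y \<Longrightarrow> precedes \<sigma> y x \<Longrightarrow> False"
  unfolding precedes_def using nth_inj by (metis order.strict_trans less_asym)

lemma label_fin: "finite (label \<sigma> E i x)" unfolding label_def by simp

lemma label_ne: assumes "0 < k" "k < length \<sigma>" shows "label \<sigma> E k (\<sigma> ! k) \<noteq> {}"
proof
  assume em: "label \<sigma> E k (\<sigma> ! k) = {}"
  let ?S = "set (take k \<sigma>)"
  obtain p where p: "walk V E p" "hd p = \<sigma> ! 0" "last p = \<sigma> ! k"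
    using ex_walk[OF r_in nth_in[OF assms(2)]] by blast
  have "\<sigma> ! 0 \<in> ?S" using assms by (simp add: in_set_conv_nth) (metis length_take min.absorb4 nth_take)
  moreover have "\<sigma> ! k \<notin> ?S"
  proof
    assume "\<sigma> ! k \<in> ?S"
    then obtain j where "j < length (take k \<sigma>)" "take k \<sigma> ! j = \<sigma> ! k" by (auto simp: in_set_conv_nth)
    thus False using nth_inj assms by auto
  qed
  ultimately obtain i where i: "Suc i < length p" "p ! i \<in> ?S" "p ! Suc i \<notin> ?S"
    using list_cross[of p ?S] p by (auto simp: walk_def)
  have e: "E (p ! i) (p ! Suc i)" using p(1) i(1) unfolding walk_def by blast
  obtain j where j: "j < k" "\<sigma> ! j = p ! i" using i(2) by (auto simp: in_set_conv_nth)
  obtain k' where k': "k' < length \<sigma>" "\<sigma> ! k' = p ! Suc i" using ex_idx inV2[OF e] by blast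
  have "\<not> k' < k"
  proof
    assume "k' < k" hence "\<sigma> ! k' \<in> ?S" using k' by (auto simp: in_set_conv_nth intro!: exI[of _ k'])
    thus False using k' i(3) by simp
  qed
  moreover have "k' \<noteq> k" using em j e k' unfolding label_def by auto
  ultimately have kk: "k < k'" by simp
  have "j \<in> label \<sigma> E k (\<sigma> ! k')" using j e k' unfolding label_def by auto
  hence "label_less (label \<sigma> E k (\<sigma> ! k)) (label \<sigma> E k (\<sigma> ! k'))" using em unfolding label_less_def by auto
  thus False using bfs_cond[OF kk k'(1)] by simp
qed

definition f where "f k = Min (label \<sigma> E k (\<sigma> ! k))"

lemma f: assumes "0 < k" "k < length \<sigma>"
  shows "f k < k" "E (\<sigma> ! f k) (\<sigma> ! k)" "\<And>j. j < k \<Longrightarrow> E (\<sigma> ! j) (\<sigma> ! k) \<Longrightarrow> f k \<le> j"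
proof -
  have "f k \<in> label \<sigma> E k (\<sigma> ! k)" unfolding f_def using label_ne[OF assms] label_fin by (rule Min_in[rotated])
  thus "f k < k" "E (\<sigma> ! f k) (\<sigma> ! k)" unfolding label_def by auto
  fix j assume "j < k" "E (\<sigma> ! j) (\<sigma> ! k)"
  thus "f k \<le> j" unfolding f_def using label_fin by (intro Min_le) (auto simp: label_def)
qed

lemma f_mono: assumes "0 < i" "i < k" "k < length \<sigma>" shows "f i \<le> f k"
proof (cases "f k < i")
  case True
  have k0: "0 < k" using assms by simp
  have fkin: "f k \<in> label \<sigma> E i (\<sigma> ! k)" using True f[OF k0 assms(3)] unfolding label_def by auto
  have mk: "Min (label \<sigma> E i (\<sigma> ! k)) = f k"
  proof (rule antisym)
    show "Min (label \<sigma> E i (\<sigma> ! k)) \<le> f k" using fkin label_fin by (rule Min_le[rotated])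
    show "f k \<le> Min (label \<sigma> E i (\<sigma> ! k))" using fkin label_fin assms(2)
      by (subst Min_ge_iff) (auto simp: label_def intro!: f(3)[OF k0 assms(3)])
  qed
  have mi: "Min (label \<sigma> E i (\<sigma> ! i)) = f i" unfolding f_def ..
  have "label \<sigma> E i (\<sigma> ! i) \<noteq> {}" using label_ne assms by simp
  with bfs_cond[OF assms(2,3)] fkin mk mi show ?thesis unfolding label_less_def by auto
next
  case False
  thus ?thesis using f(1)[OF assms(1)] assms by simp
qed

lemma d_mono_aux: "\<forall>i k. i < k \<and> k < length \<sigma> \<and> d (\<sigma>!0) (\<sigma>!k) = m \<longrightarrow> d (\<sigma>!0) (\<sigma>!i) \<le> m"
proof (induction m rule: less_induct)
  case (less m)
  show ?case
  proof (intro allI impI, elim conjE, rule ccontr)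
    fix i k assume ik: "i < k" "k < length \<sigma>" "d (\<sigma>!0) (\<sigma>!k) = m" "\<not> d (\<sigma>!0) (\<sigma>!i) \<le> m"
    have iV: "\<sigma> ! i \<in> V" using ik nth_in by simp
    have kr: "\<sigma> ! k \<noteq> \<sigma> ! 0" using nth_inj[of k 0] ik len_pos by auto
    have i0: "i \<noteq> 0"
    proof
      assume "i = 0" with ik(4) d_refl[OF r_in] show False by simp
    qed
    obtain y where y: "E y (\<sigma>!k)" "d (\<sigma>!0) y + 1 = m" using d_pred[OF r_in nth_in[OF ik(2)] kr] ik(3) by blast
    obtain q where q: "q < length \<sigma>" "\<sigma> ! q = y" using ex_idx inV1[OF y(1)] by blast
    have "q \<noteq> k" using irr y q by auto
    show False
    proof (cases "q < k")
      case False
      hence "k < q" using \<open>q \<noteq> k\<close> by simp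
      hence "d (\<sigma>!0) (\<sigma>!i) \<le> d (\<sigma>!0) y" using less.IH[of "d (\<sigma>!0) y"] y(2) ik q by auto
      thus False using ik y by simp
    next
      case True
      have fk: "f k \<le> q" using f(3)[of k q] ik True q y i0 by auto
      have fi: "f i < i" "E (\<sigma> ! f i) (\<sigma> ! i)" using f[of i] i0 ik by auto
      have "d (\<sigma>!0) (\<sigma>!i) \<le> d (\<sigma>!0) (\<sigma> ! f i) + 1" using d_edge[OF r_in fi(2)] .
      hence gt: "d (\<sigma>!0) (\<sigma> ! f i) > d (\<sigma>!0) y" using ik y by simp
      have "\<not> f i < q"
      proof
        assume "f i < q"
        hence "d (\<sigma>!0) (\<sigma> ! f i) \<le> d (\<sigma>!0) y" using less.IH[of "d (\<sigma>!0) y"] y(2) q by auto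
        thus False using gt by simp
      qed
      moreover have "f i \<noteq> q" using gt q by auto
      ultimately have "f k < f i" using fk by simp
      moreover have "f i \<le> f k" using f_mono[of i k] i0 ik by simp
      ultimately show False by simp
    qed
  qed
qed

lemma d_mono: "i \<le> k \<Longrightarrow> k < length \<sigma> \<Longrightarrow> d (\<sigma>!0) (\<sigma>!i) \<le> d (\<sigma>!0) (\<sigma>!k)"
  using d_mono_aux[rule_format, of i k "d (\<sigma>!0) (\<sigma>!k)"] by (cases "i = k") auto

lemma rml_ex: assumes "0 < k" "k < length \<sigma>"
  shows "\<exists>j<k. rightmost_left_nb \<sigma> E (\<sigma> ! k) (\<sigma> ! j)"
proof -
  let ?L = "label \<sigma> E k (\<sigma> ! k)"
  define j where "j = Max ?L"
  have jL: "j \<in> ?L" unfolding j_def using label_ne[OF assms] label_fin by (rule Max_in[rotated])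
  hence j: "j < k" "E (\<sigma> ! j) (\<sigma> ! k)" unfolding label_def by auto
  have "rightmost_left_nb \<sigma> E (\<sigma> ! k) (\<sigma> ! j)" unfolding rightmost_left_nb_def
  proof (intro conjI allI impI)
    show "E (\<sigma> ! j) (\<sigma> ! k)" by fact
    show "precedes \<sigma> (\<sigma> ! j) (\<sigma> ! k)" using prec_iff j assms by simp
    fix w' assume w': "E w' (\<sigma> ! k) \<and> precedes \<sigma> w' (\<sigma> ! k)"
    then obtain a b where ab: "a < b" "b < length \<sigma>" "\<sigma> ! a = w'" "\<sigma> ! b = \<sigma> ! k" using prec_idx by blast
    have "b = k" using ab nth_inj assms by auto
    hence "a \<in> ?L" using ab w' unfolding label_def by auto
    hence "a \<le> j" unfolding j_def using label_fin by (rule Max_ge[rotated])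
    thus "w' = \<sigma> ! j \<or> precedes \<sigma> w' (\<sigma> ! j)" using ab prec_iff j assms
      by (cases "a = j") auto
  qed
  thus ?thesis using j by blast
qed

lemma rml_d: assumes "k < length \<sigma>" "rightmost_left_nb \<sigma> E (\<sigma> ! k) w"
  shows "d (\<sigma>!0) w + 1 = d (\<sigma>!0) (\<sigma> ! k)"
proof -
  have e: "E w (\<sigma> ! k)" and pr: "precedes \<sigma> w (\<sigma> ! k)" using assms(2) unfolding rightmost_left_nb_def by auto
  obtain a b where ab: "a < b" "b < length \<sigma>" "\<sigma> ! a = w" "\<sigma> ! b = \<sigma> ! k" using prec_idx[OF pr] by blast
  have "b = k" using ab nth_inj assms by auto
  have "d (\<sigma>!0) w \<le> d (\<sigma>!0) (\<sigma> ! k)" using d_mono[of a b] ab \<open>b = k\<close> by simp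
  moreover have "d (\<sigma>!0) (\<sigma> ! k) \<le> d (\<sigma>!0) w + 1" using d_edge[OF r_in e] .
  moreover have "d (\<sigma>!0) w \<noteq> d (\<sigma>!0) (\<sigma> ! k)" using d_parity[OF r_in e] .
  ultimately show ?thesis by simp
qed

lemma rml_unique: "rightmost_left_nb \<sigma> E x w1 \<Longrightarrow> rightmost_left_nb \<sigma> E x w2 \<Longrightarrow> w1 = w2"
  unfolding rightmost_left_nb_def using prec_asym by blast


lemma in_take: "a < length \<sigma> \<Longrightarrow> \<sigma> ! a \<in> set (take t \<sigma>) \<longleftrightarrow> a < t"
proof
  assume a: "a < length \<sigma>" "\<sigma> ! a \<in> set (take t \<sigma>)"
  then obtain j where "j < length (take t \<sigma>)" "take t \<sigma> ! j = \<sigma> ! a" by (auto simp: in_set_conv_nth)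
  thus "a < t" using a nth_inj by auto
next
  assume "a < length \<sigma>" "a < t"
  thus "\<sigma> ! a \<in> set (take t \<sigma>)" by (auto simp: in_set_conv_nth intro!: exI[of _ a])
qed

lemma gdist_del_ge:
  assumes "a \<in> V" "b \<in> V"
  shows "enat (d a b) \<le> gdist (V - {v}) (\<lambda>x y. E x y \<and> x \<noteq> v \<and> y \<noteq> v) a b"
  unfolding gdist_def by (rule INF_greatest) (auto dest!: walk_mono dn_le)

lemma forward:
  assumes leaf: "L_branch_leaf \<sigma> E v"
  shows "\<exists>r \<in> V - {v}. \<forall>w \<in> V - {v}.
            gdist V E r w = gdist (fst (del_vertex V E v)) (snd (del_vertex V E v)) r w"
proof -
  let ?V' = "V - {v}" and ?E' = "\<lambda>x y. E x y \<and> x \<noteq> v \<and> y \<noteq> v"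
  let ?r = "\<sigma> ! 0"
  have vs: "v \<in> set \<sigma>" "v \<noteq> hd \<sigma>" and c1: "card {e \<in> L_tree_edges \<sigma> E. v \<in> e} = 1"
    using leaf unfolding L_branch_leaf_def by auto
  obtain kv where kv: "kv < length \<sigma>" "\<sigma> ! kv = v" using vs(1) by (metis in_set_conv_nth)
  have kv0: "0 < kv" using kv vs(2) hd_sig by (cases kv) auto
  obtain jv where jv: "jv < kv" "rightmost_left_nb \<sigma> E v (\<sigma> ! jv)" using rml_ex[OF kv0 kv(1)] kv by auto
  have pe: "{\<sigma> ! jv, v} \<in> {e \<in> L_tree_edges \<sigma> E. v \<in> e}" unfolding L_tree_edges_def using vs jv by blast
  have nochild: "\<not> rightmost_left_nb \<sigma> E w v" if "w \<in> set \<sigma>" "w \<noteq> hd \<sigma>" for w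
  proof
    assume rm: "rightmost_left_nb \<sigma> E w v"
    have "{v, w} \<in> {e \<in> L_tree_edges \<sigma> E. v \<in> e}" unfolding L_tree_edges_def using that rm by blast
    with pe c1 have "{v, w} = {\<sigma> ! jv, v}" by (metis card_1_singletonE singletonD)
    moreover have "w \<noteq> v" using rm irr unfolding rightmost_left_nb_def by auto
    ultimately have "w = \<sigma> ! jv" by auto
    hence "precedes \<sigma> w v" "precedes \<sigma> v w" using jv rm unfolding rightmost_left_nb_def by auto
    thus False using prec_asym by blast
  qed
  have claim: "\<forall>w \<in> ?V'. d ?r w = m \<longrightarrow> (\<exists>p. walk ?V' ?E' p \<and> hd p = ?r \<and> last p = w \<and> length p = Suc m)" for m
  proof (induction m)
    case 0
    show ?case
    proof (intro ballI impI)
      fix w assume w: "w \<in> ?V'" "d ?r w = 0"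
      hence "w = ?r" using d_zero[OF r_in] by auto
      thus "\<exists>p. walk ?V' ?E' p \<and> hd p = ?r \<and> last p = w \<and> length p = Suc 0"
        using w by (intro exI[of _ "[w]"]) (auto simp: walk_def)
    qed
  next
    case (Suc m)
    show ?case
    proof (intro ballI impI)
      fix w assume w: "w \<in> ?V'" "d ?r w = Suc m"
      obtain k where k: "k < length \<sigma>" "\<sigma> ! k = w" using ex_idx w by blast
      have k0: "0 < k"
      proof (rule ccontr)
        assume "\<not> 0 < k" hence "w = ?r" using k by simp
        thus False using w d_refl[OF r_in] by simp
      qed
      obtain j where j: "j < k" "rightmost_left_nb \<sigma> E w (\<sigma> ! j)" using rml_ex[OF k0 k(1)] k by auto
      have du: "d ?r (\<sigma> ! j) = m" using rml_d[OF k(1)] j k w by fastforce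
      have ws: "w \<in> set \<sigma>" "w \<noteq> hd \<sigma>" using k k0 nth_inj[of k 0] hd_sig len_pos by auto
      have uv: "\<sigma> ! j \<noteq> v" using nochild[OF ws] j by auto
      have uV: "\<sigma> ! j \<in> ?V'" using uv nth_in j k by auto
      obtain p where p: "walk ?V' ?E' p" "hd p = ?r" "last p = \<sigma> ! j" "length p = Suc m"
        using Suc.IH uV du by blast
      have e: "E (\<sigma> ! j) w" using j unfolding rightmost_left_nb_def by auto
      have "walk ?V' ?E' (p @ [w])" using walk_snoc[OF p(1)] p(3) e uv w by auto
      moreover have "hd (p @ [w]) = ?r" using p by (auto simp: walk_def)
      ultimately show "\<exists>p. walk ?V' ?E' p \<and> hd p = ?r \<and> last p = w \<and> length p = Suc (Suc m)"
        using p by (intro exI[of _ "p @ [w]"]) auto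
    qed
  qed
  have rv: "?r \<in> ?V'" using r_in vs(2) hd_sig by auto
  show ?thesis
  proof (intro bexI[OF _ rv] ballI)
    fix w assume w: "w \<in> ?V'"
    obtain p where p: "walk ?V' ?E' p" "hd p = ?r" "last p = w" "length p = Suc (d ?r w)"
      using claim w by blast
    have "gdist ?V' ?E' ?r w \<le> enat (d ?r w)" using gdist_le[OF p(1-3)] p(4) by simp
    moreover have "enat (d ?r w) \<le> gdist ?V' ?E' ?r w" using gdist_del_ge r_in w by auto
    ultimately show "gdist V E ?r w = gdist (fst (del_vertex V E v)) (snd (del_vertex V E v)) ?r w"
      using gdist_d[OF r_in] w by (simp add: del_vertex_def)
  qed
qed

end


context bg
begin

definition lab :: "'a list \<Rightarrow> 'a \<Rightarrow> nat set" where
  "lab xs x = {j. j < length xs \<and> E (xs ! j) x}"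

definition cands :: "'a list \<Rightarrow> 'a set" where
  "cands xs = {x \<in> V - set xs. \<forall>y \<in> V - set xs. gkey (lab xs x) \<le> gkey (lab xs y)}"

definition pick :: "'a \<Rightarrow> 'a set \<Rightarrow> 'a list \<Rightarrow> 'a" where
  "pick r P xs = (if xs = [] then r else SOME x. x \<in> cands xs \<and> (x \<notin> P \<longrightarrow> cands xs \<inter> P = {}))"

primrec build :: "'a \<Rightarrow> 'a set \<Rightarrow> nat \<Rightarrow> 'a list" where
  "build r P 0 = []"
| "build r P (Suc m) = build r P m @ [pick r P (build r P m)]"

lemma len_build: "length (build r P m) = m" by (induction m) auto

lemma cands_ne: assumes "V - set xs \<noteq> {}" shows "cands xs \<noteq> {}"
proof -
  let ?S = "V - set xs"
  have fin: "finite (gkey ` lab xs ` ?S)" using finV by simp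
  have "Min ((\<lambda>x. gkey (lab xs x)) ` ?S) \<in> (\<lambda>x. gkey (lab xs x)) ` ?S"
    using finV assms by (intro Min_in) auto
  then obtain x where x: "x \<in> ?S" "gkey (lab xs x) = Min ((\<lambda>x. gkey (lab xs x)) ` ?S)" by auto
  have "\<forall>y \<in> ?S. gkey (lab xs x) \<le> gkey (lab xs y)" using x(2) finV by (auto intro: Min_le)
  thus ?thesis using x(1) unfolding cands_def by blast
qed

lemma pick_prop: assumes "xs \<noteq> []" "V - set xs \<noteq> {}"
  shows "pick r P xs \<in> cands xs" "pick r P xs \<notin> P \<Longrightarrow> cands xs \<inter> P = {}"
proof -
  have "\<exists>x. x \<in> cands xs \<and> (x \<notin> P \<longrightarrow> cands xs \<inter> P = {})"
    using cands_ne[OF assms(2)] by blast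
  from someI_ex[OF this] assms(1)
  show "pick r P xs \<in> cands xs" "pick r P xs \<notin> P \<Longrightarrow> cands xs \<inter> P = {}" unfolding pick_def by auto
qed

lemma cands_sub: "cands xs \<subseteq> V - set xs" unfolding cands_def by auto

lemma build_props: assumes "r \<in> V" shows "m \<le> card V \<Longrightarrow> distinct (build r P m) \<and> set (build r P m) \<subseteq> V"
proof (induction m)
  case 0 thus ?case by simp
next
  case (Suc m)
  hence IH: "distinct (build r P m)" "set (build r P m) \<subseteq> V" by auto
  have "card (set (build r P m)) = m" using IH(1) distinct_card len_build by metis
  hence "V - set (build r P m) \<noteq> {}" using Suc.prems IH(2) finV
    by (metis Diff_eq_empty_iff Suc_le_lessD card_mono nat_less_le subset_antisym)
  hence "pick r P (build r P m) \<in> V - set (build r P m)"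
    using pick_prop(1)[of "build r P m" r P] cands_sub assms by (cases "build r P m = []") (auto simp: pick_def)
  thus ?case using IH by auto
qed

lemma take_build: "m \<le> m' \<Longrightarrow> take m (build r P m') = build r P m"
proof (induction m')
  case 0 thus ?case by simp
next
  case (Suc m')
  show ?case
  proof (cases "m = Suc m'")
    case True thus ?thesis using len_build by simp
  next
    case False
    hence "m \<le> m'" using Suc.prems by simp
    thus ?thesis using Suc.IH len_build by simp
  qed
qed

lemma nth_build: assumes "i < m" shows "build r P m ! i = pick r P (build r P i)"
proof -
  have "build r P m ! i = take (Suc i) (build r P m) ! i" using assms by simp
  also have "\<dots> = build r P (Suc i) ! i" using take_build[of "Suc i" m] assms by simp
  also have "\<dots> = pick r P (build r P i)" using len_build by (simp add: nth_append)
  finally show ?thesis .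
qed

lemma build_bfs:
  fixes r :: 'a and P :: "'a set"
  assumes rV: "r \<in> V"
  defines "\<sigma> \<equiv> build r P (card V)"
  shows "bfs_ordering V E \<sigma>" "length \<sigma> = card V" "\<And>i. i < card V \<Longrightarrow> take i \<sigma> = build r P i"
    "\<And>i. i < card V \<Longrightarrow> \<sigma> ! i = pick r P (build r P i)"
proof -
  have bp: "distinct \<sigma>" "set \<sigma> \<subseteq> V" using build_props[OF rV] \<sigma>_def by auto
  show len: "length \<sigma> = card V" using len_build \<sigma>_def by simp
  have set: "set \<sigma> = V" using bp len finV by (metis card_subset_eq distinct_card)
  show tk: "\<And>i. i < card V \<Longrightarrow> take i \<sigma> = build r P i" using take_build \<sigma>_def by simp
  show nb: "\<And>i. i < card V \<Longrightarrow> \<sigma> ! i = pick r P (build r P i)" using nth_build \<sigma>_def by simp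
  show "bfs_ordering V E \<sigma>" unfolding bfs_ordering_def
  proof (intro conjI allI impI)
    show "distinct \<sigma>" "set \<sigma> = V" by fact+
    fix i k assume ik: "i < k \<and> k < length \<sigma>"
    have labeq: "label \<sigma> E i x = lab (build r P i) x" for x
    proof -
      have "\<sigma> ! j = build r P i ! j" if "j < i" for j
        using nb[of j] nth_build[of j i] that ik len by simp
      thus ?thesis unfolding label_def lab_def using len_build by auto
    qed
    show "\<not> label_less (label \<sigma> E i (\<sigma> ! i)) (label \<sigma> E i (\<sigma> ! k))"
    proof (cases "i = 0")
      case True thus ?thesis unfolding label_def label_less_def by simp
    next
      case False
      have sb: "set (build r P i) = set (take i \<sigma>)" using tk ik len by simp
      have ne: "build r P i \<noteq> []" using False len_build by (metis length_0_conv)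
      have kn: "\<sigma> ! k \<notin> set (build r P i)"
      proof
        assume "\<sigma> ! k \<in> set (build r P i)"
        then obtain j where "j < length (take i \<sigma>)" "take i \<sigma> ! j = \<sigma> ! k" using sb by (auto simp: in_set_conv_nth)
        thus False using ik bp(1) by (auto simp: nth_eq_iff_index_eq)
      qed
      have kV: "\<sigma> ! k \<in> V" using ik set nth_mem by blast
      hence "V - set (build r P i) \<noteq> {}" using kn by blast
      hence "\<sigma> ! i \<in> cands (build r P i)" using pick_prop(1)[OF ne] nb ik len by simp
      hence "gkey (lab (build r P i) (\<sigma> ! i)) \<le> gkey (lab (build r P i) (\<sigma> ! k))"
        using kV kn unfolding cands_def by blast
      thus ?thesis unfolding labeq by (subst label_less_gkey) (auto simp: lab_def)
    qed
  qed
qed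


primrec chain :: "'a \<Rightarrow> 'a \<Rightarrow> nat \<Rightarrow> 'a" where
  "chain r v 0 = v"
| "chain r v (Suc i) = (SOME y. E y (chain r v i) \<and> dn V E r y + 1 = dn V E r (chain r v i))"

lemma chain_props1: assumes "r \<in> V" "v \<in> V"
  shows "i \<le> d r v \<Longrightarrow> chain r v i \<in> V \<and> d r (chain r v i) = d r v - i"
proof (induction i)
  case 0 thus ?case using assms by simp
next
  case (Suc i)
  hence IH: "chain r v i \<in> V" "d r (chain r v i) = d r v - i" by auto
  have "chain r v i \<noteq> r" using IH Suc.prems d_refl[OF assms(1)] by auto
  hence "\<exists>y. E y (chain r v i) \<and> d r y + 1 = d r (chain r v i)" using d_pred[OF assms(1) IH(1)] by blast
  from someI_ex[OF this] have "E (chain r v (Suc i)) (chain r v i)" "d r (chain r v (Suc i)) + 1 = d r (chain r v i)"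
    by auto
  thus ?case using IH inV1 by auto
qed

lemma chain_props2: assumes "r \<in> V" "v \<in> V" "i < d r v"
  shows "E (chain r v (Suc i)) (chain r v i)"
proof -
  have IH: "chain r v i \<in> V" "d r (chain r v i) = d r v - i" using chain_props1 assms by auto
  have "chain r v i \<noteq> r" using IH assms d_refl[OF assms(1)] by auto
  hence "\<exists>y. E y (chain r v i) \<and> d r y + 1 = d r (chain r v i)" using d_pred[OF assms(1) IH(1)] by blast
  from someI_ex[OF this] show ?thesis by auto
qed

lemma backward:
  assumes rv: "r \<in> V - {v}" and vV: "v \<in> V"
    and hyp: "\<forall>w \<in> V - {v}. gdist V E r w = gdist (V - {v}) (\<lambda>x y. E x y \<and> x \<noteq> v \<and> y \<noteq> v) r w"
  shows "\<exists>\<sigma>. bfs_ordering V E \<sigma> \<and> L_branch_leaf \<sigma> E v"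
proof -
  let ?V' = "V - {v}" and ?E' = "\<lambda>x y. E x y \<and> x \<noteq> v \<and> y \<noteq> v"
  have rV: "r \<in> V" using rv by simp
  define K where "K = d r v"
  have K0: "0 < K" using d_zero[OF rV vV] rv unfolding K_def by (cases "d r v") auto
  define P where "P = chain r v ` {..K}"
  define \<sigma> where "\<sigma> = build r P (card V)"
  note bb = build_bfs[OF rV, where P=P, folded \<sigma>_def]
  have Vne: "V \<noteq> {}" using rV by auto
  interpret B: bfs V E \<sigma> using bb(1) Vne by unfold_locales auto
  have N: "length \<sigma> = card V" by (rule bb(2))
  have cpos: "0 < card V" using finV Vne by (simp add: card_gt_0_iff)
  have s0: "\<sigma> ! 0 = r" using bb(4)[OF cpos] by (simp add: pick_def)
  have tkN: "build r P t = take t \<sigma>" if "t < length \<sigma>" for t using bb(3) that N by simp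
  have labs: "lab (build r P t) z = {a. a < t \<and> E (\<sigma> ! a) z}" if "t < length \<sigma>" for t z
    using that unfolding tkN[OF that] lab_def by auto
  have dmono: "i \<le> k \<Longrightarrow> k < length \<sigma> \<Longrightarrow> d r (\<sigma> ! i) \<le> d r (\<sigma> ! k)" for i k
    using B.d_mono[of i k] s0 by simp
  have ch: "chain r v (K - j) \<in> V \<and> d r (chain r v (K - j)) = j" if "j \<le> K" for j
    using chain_props1[OF rV vV, of "K - j"] that unfolding K_def by auto
  have FL: "j \<le> K \<Longrightarrow> \<exists>t < length \<sigma>. \<sigma> ! t = chain r v (K - j) \<and> (\<forall>i<t. d r (\<sigma> ! i) < j)" for j
  proof (induction j)
    case 0
    have c: "chain r v K \<in> V" "d r (chain r v K) = 0" using ch[of 0] by auto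
    have "r = chain r v K" using d_zero[OF rV c(1) c(2)] .
    hence "chain r v K = r" by simp
    thus ?case using s0 B.len_pos by auto
  next
    case (Suc j)
    then obtain tj where tj: "tj < length \<sigma>" "\<sigma> ! tj = chain r v (K - j)" "\<forall>i<tj. d r (\<sigma> ! i) < j" by auto
    define x where "x = chain r v (K - j)"
    define y where "y = chain r v (K - Suc j)"
    have dx: "d r x = j" using ch[of j] Suc.prems unfolding x_def by simp
    have yV: "y \<in> V" and dy: "d r y = Suc j" using ch[of "Suc j"] Suc.prems unfolding y_def by auto
    have Exy: "E x y"
      using chain_props2[OF rV vV, of "K - Suc j"] Suc.prems K_def unfolding x_def y_def
      by (simp add: Suc_diff_Suc)
    obtain ty where ty: "ty < length \<sigma>" "\<sigma> ! ty = y" using B.ex_idx yV by blast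
    define Q where "Q = (\<lambda>i. i < length \<sigma> \<and> Suc j \<le> d r (\<sigma> ! i))"
    define t where "t = (LEAST i. Q i)"
    have ex: "Q ty" using ty dy unfolding Q_def by simp
    have t: "t < length \<sigma>" "Suc j \<le> d r (\<sigma> ! t)" using LeastI[of Q ty, OF ex] unfolding t_def Q_def by auto
    have tty: "t \<le> ty" using Least_le[of Q ty, OF ex] unfolding t_def .
    have before: "d r (\<sigma> ! i) \<le> j" if "i < t" for i
    proof -
      have "\<not> Q i" using not_less_Least[of i Q] that unfolding t_def by blast
      thus ?thesis using that t(1) unfolding Q_def by auto
    qed
    have tjt: "tj < t"
    proof (rule ccontr)
      assume "\<not> tj < t"
      hence "d r (\<sigma> ! t) \<le> d r (\<sigma> ! tj)" using dmono tj(1) by simp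
      thus False using t(2) tj(2) dx x_def by simp
    qed
    let ?bt = "build r P t"
    have bt_ne: "?bt \<noteq> []" using tjt len_build by (metis length_0_conv not_less0)
    have notin: "\<sigma> ! a \<notin> set ?bt" if "a < length \<sigma>" "t \<le> a" for a
      using B.in_take[OF that(1)] that tkN[OF t(1)] by simp
    have yn: "y \<notin> set ?bt" using notin[OF ty(1) tty] ty by simp
    have tjin: "tj \<in> lab ?bt y" using labs[OF t(1)] tjt tj(2) Exy x_def by simp
    have gky: "gkey (lab ?bt y) \<le> enat tj"
    proof -
      have "lab ?bt y \<noteq> {}" using tjin by auto
      moreover have "Min (lab ?bt y) \<le> tj" using tjin by (intro Min_le) (auto simp: labs[OF t(1)])
      ultimately show ?thesis unfolding gkey_def by simp
    qed
    have gkz: "enat tj \<le> gkey (lab ?bt z)" if zin: "z \<in> V - set ?bt" for z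
    proof (cases "lab ?bt z = {}")
      case True thus ?thesis unfolding gkey_def by simp
    next
      case False
      obtain tz where tz: "tz < length \<sigma>" "\<sigma> ! tz = z" using B.ex_idx zin by blast
      have "t \<le> tz" using B.in_take[OF tz(1), of t] tkN[OF t(1)] zin tz by auto
      hence dz: "Suc j \<le> d r z" using dmono[of t tz] tz t by simp
      have "Min (lab ?bt z) \<in> lab ?bt z" using False by (intro Min_in) (auto simp: labs[OF t(1)])
      then obtain a where a: "a = Min (lab ?bt z)" "a < t" "E (\<sigma> ! a) z" using labs[OF t(1)] by auto
      have "d r z \<le> d r (\<sigma> ! a) + 1" using d_edge[OF rV a(3)] .
      hence "j \<le> d r (\<sigma> ! a)" using dz by simp
      hence "tj \<le> a" using tj(3) by (meson not_less)
      thus ?thesis using False a(1) unfolding gkey_def by simp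
    qed
    have ycand: "y \<in> cands ?bt" unfolding cands_def using yV yn gky gkz by (auto intro: order.trans)
    have yP: "y \<in> P" unfolding P_def y_def by auto
    have Vne': "V - set ?bt \<noteq> {}" using yV yn by auto
    have pc: "pick r P ?bt \<in> cands ?bt" using pick_prop(1)[OF bt_ne Vne'] .
    have pP: "pick r P ?bt \<in> P" using pick_prop(2)[OF bt_ne Vne'] ycand yP by blast
    have st: "\<sigma> ! t = pick r P ?bt" using bb(4) t(1) N by simp
    obtain i' where i': "i' \<le> K" "\<sigma> ! t = chain r v i'" using pP st unfolding P_def by auto
    have di': "d r (\<sigma> ! t) = K - i'" using chain_props1[OF rV vV, of i'] i' unfolding K_def by simp
    have "K - i' = Suc j"
    proof (rule ccontr)
      assume ne: "K - i' \<noteq> Suc j"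
      have "lab ?bt (\<sigma> ! t) = {}"
      proof (rule ccontr)
        assume "lab ?bt (\<sigma> ! t) \<noteq> {}"
        then obtain a where a: "a < t" "E (\<sigma> ! a) (\<sigma> ! t)" using labs[OF t(1)] by auto
        have "d r (\<sigma> ! t) \<le> d r (\<sigma> ! a) + 1" using d_edge[OF rV a(2)] .
        thus False using before[OF a(1)] ne di' t(2) by simp
      qed
      hence "gkey (lab ?bt (\<sigma> ! t)) = \<infinity>" unfolding gkey_def by simp
      moreover have "gkey (lab ?bt (\<sigma> ! t)) \<le> gkey (lab ?bt y)" using pc st yV yn unfolding cands_def by auto
      ultimately show False using gky by (simp add: top_unique[of "enat tj", unfolded top_enat_def]) 
    qed
    hence "i' = K - Suc j" using i'(1) by simp
    hence "\<sigma> ! t = chain r v (K - Suc j)" using i' by simp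
    moreover have "\<forall>i<t. d r (\<sigma> ! i) < Suc j" using before by (simp add: le_imp_less_Suc)
    ultimately show ?case using t(1) by blast
  qed
  obtain tv where tv: "tv < length \<sigma>" "\<sigma> ! tv = v" "\<forall>i<tv. d r (\<sigma> ! i) < K"
    using FL[of K] by auto
  have tv0: "0 < tv" using tv s0 rv by (cases tv) auto
  obtain jv where jv: "jv < tv" "rightmost_left_nb \<sigma> E v (\<sigma> ! jv)" using B.rml_ex[OF tv0 tv(1)] tv by auto
  have hd: "hd \<sigma> = r" using B.hd_sig s0 by simp
  have vs: "v \<in> set \<sigma>" using tv by (metis nth_mem)
  have nochild: False if v': "v' \<in> set \<sigma>" "v' \<noteq> hd \<sigma>" "rightmost_left_nb \<sigma> E v' v" for v'
  proof -
    obtain q where q: "q < length \<sigma>" "\<sigma> ! q = v'" using v'(1) by (metis in_set_conv_nth)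
    have dv': "d r v' = Suc K" using B.rml_d[of q v] q v'(3) s0 K_def by simp
    have v'v: "v' \<noteq> v" using dv' K_def by auto
    have v'V: "v' \<in> V" using B.nth_in q by auto
    have g1: "gdist V E r v' = enat (Suc K)" using gdist_d[OF rV v'V] dv' by simp
    have g2: "gdist ?V' ?E' r v' = enat (Suc K)" using hyp v'V v'v g1 by auto
    have "\<exists>p. walk ?V' ?E' p \<and> hd p = r \<and> last p = v'"
    proof (rule ccontr)
      assume "\<not> ?thesis"
      from gdist_inf[OF this] g2 show False by simp
    qed
    then obtain p0 where p0: "walk ?V' ?E' p0" "hd p0 = r" "last p0 = v'" by blast
    have dn': "dn ?V' ?E' r v' = Suc K" using gdist_dn[OF p0] g2 by simp
    obtain p where p: "walk ?V' ?E' p" "hd p = r" "last p = v'" "length p = Suc (Suc K)"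
      using dn_walk[OF p0] dn' by auto
    have "length p \<ge> 2" using p(4) by simp
    note b = walk_butlast[OF p(1) this]
    define u where "u = last (butlast p)"
    have Eu: "E u v'" "u \<noteq> v" using b(3) p(3) unfolding u_def by auto
    have "d r u \<le> length (butlast p) - 1" using dn_le[OF walk_mono[OF b(1)]] b(2) p(2) unfolding u_def by simp
    hence du1: "d r u \<le> K" using p(4) by simp
    have "d r v' \<le> d r u + 1" using d_edge[OF rV Eu(1)] .
    hence du: "d r u = K" using du1 dv' by simp
    obtain a where a: "a < length \<sigma>" "\<sigma> ! a = u" using B.ex_idx inV1[OF Eu(1)] by blast
    have "\<not> a < tv" using tv(3) a du by auto
    moreover have "a \<noteq> tv" using a tv Eu by auto
    ultimately have atv: "tv < a" by simp
    have "a < q"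
    proof (rule ccontr)
      assume "\<not> a < q"
      hence "d r (\<sigma> ! q) \<le> d r (\<sigma> ! a)" using dmono[of q a] a by simp
      thus False using q a du dv' by simp
    qed
    hence "precedes \<sigma> u v'" using B.prec_iff a q by auto
    with v'(3) Eu have "u = v \<or> precedes \<sigma> u v" unfolding rightmost_left_nb_def by blast
    moreover have "\<not> precedes \<sigma> u v" using B.prec_iff[of a tv] a tv atv by simp
    ultimately show False using Eu by blast
  qed
  have seteq: "{e \<in> L_tree_edges \<sigma> E. v \<in> e} = {{\<sigma> ! jv, v}}"
  proof (intro equalityI subsetI)
    fix e assume e: "e \<in> {e \<in> L_tree_edges \<sigma> E. v \<in> e}"
    then obtain v' w' where vw: "e = {w', v'}" "v' \<in> set \<sigma>" "v' \<noteq> hd \<sigma>" "rightmost_left_nb \<sigma> E v' w'"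
      unfolding L_tree_edges_def by blast
    show "e \<in> {{\<sigma> ! jv, v}}"
    proof (cases "v' = v")
      case True
      hence "w' = \<sigma> ! jv" using B.rml_unique vw(4) jv(2) by blast
      thus ?thesis using vw True by auto
    next
      case False
      hence "w' = v" using e vw by auto
      thus ?thesis using nochild[OF vw(2,3)] vw(4) by simp
    qed
  next
    fix e assume "e \<in> {{\<sigma> ! jv, v}}"
    hence "e = {\<sigma> ! jv, v}" by simp
    thus "e \<in> {e \<in> L_tree_edges \<sigma> E. v \<in> e}" unfolding L_tree_edges_def using vs hd rv jv by blast
  qed
  have "L_branch_leaf \<sigma> E v" unfolding L_branch_leaf_def using vs hd rv seteq by auto
  thus ?thesis using bb(1) by blast
qed

end

theorem theorem7:
  fixes V :: "'a set" and E :: "'a \<Rightarrow> 'a \<Rightarrow> bool" and v :: 'a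
  assumes "graph V E" and "connected_graph V E" and "bipartite V E"
    and "card V \<ge> 2" and "v \<in> V"
  shows "(\<exists>\<sigma>. bfs_ordering V E \<sigma> \<and> L_branch_leaf \<sigma> E v) \<longleftrightarrow>
         (\<exists>r \<in> V - {v}. \<forall>w \<in> V - {v}.
            gdist V E r w = gdist (fst (del_vertex V E v)) (snd (del_vertex V E v)) r w)"
proof -
  interpret bg V E using assms(1-3) by unfold_locales
  show ?thesis
  proof
    assume "\<exists>\<sigma>. bfs_ordering V E \<sigma> \<and> L_branch_leaf \<sigma> E v"
    then obtain \<sigma> where s: "bfs_ordering V E \<sigma>" "L_branch_leaf \<sigma> E v" by blast
    interpret B: bfs V E \<sigma> using s(1) assms(5) by unfold_locales auto
    show "\<exists>r \<in> V - {v}. \<forall>w \<in> V - {v}.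
            gdist V E r w = gdist (fst (del_vertex V E v)) (snd (del_vertex V E v)) r w"
      using B.forward[OF s(2)] .
  next
    assume "\<exists>r \<in> V - {v}. \<forall>w \<in> V - {v}.
            gdist V E r w = gdist (fst (del_vertex V E v)) (snd (del_vertex V E v)) r w"
    then obtain r where r: "r \<in> V - {v}" and h: "\<forall>w \<in> V - {v}.
            gdist V E r w = gdist (fst (del_vertex V E v)) (snd (del_vertex V E v)) r w" by blast
    show "\<exists>\<sigma>. bfs_ordering V E \<sigma> \<and> L_branch_leaf \<sigma> E v"
      using backward[OF r assms(5)] h by (simp add: del_vertex_def)
  qed
qed

end
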